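(* Suppose $\mathcal{H}_\kappa(L_1,L_2)$ is regular. Let $s\in S$ and let $A_s\xrightarrow{w}F$ be a path in $\mathcal{A}$ from $A_s$ to a final state $F$. Then $w$ is a prefix of some word in $v_s^+$. In addition, the word $v_s$ is uniquely determined, and the loop $A_s\xrightarrow{v_s}A_s$ visits every state $B\in s\setminus\{A_s\}$ exactly once; thus it is a Hamiltonian cycle of $s$ and $|v_s|=N_s$.
   Context: $\Sigma$ is a finite alphabet with at least two letters with an involution $a\mapsto\bar a$ ($\bar{\bar a}=a$), extended to words by $\overline{a_1\cdots a_m}=\bar a_m\cdots\bar a_1$ and to languages elementwise. $\kappa$ is a fixed positive integer. $\mathcal{H}_\kappa(L_1,L_2)=\{\gamma\alpha\beta\bar\alpha\bar\gamma:|\alpha|\ge\kappa,\ \gamma\alpha\beta\bar\alpha\in L_1\text{ or }\alpha\beta\bar\alpha\bar\gamma\in L_2\}$. $L_1,L_2$ are regular; $\mathcal{A}_1=(Q_1,\Sigma,E_1,\{q_{01}\},F_1)$ is a complete DFA accepting $L_1$, $\mathcal{A}_2=(Q_2,\Sigma,E_2,\{q_{02}\},F_2)$ a complete DFA accepting $\overline{L_2}$; $p\cdot w$ is the state reached from $p$ on $w$. Construction of $\mathcal{A}$: $Q_{12}=\{(q_{01}\cdot w,q_{02}\cdot w):w\in\Sigma^*\}$ with $(p_1,p_2)\cdot w=(p_1\cdot w,p_2\cdot w)$. For $(p_1,p_2,q_1,q_2)\in Q_1\times Q_2\times Q_1\times Q_2$ let $B(p_1,p_2,q_1,q_2)=\{w:p_1\cdot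 w=q_1,\ p_2\cdot\bar w=q_2\}$; the quadruple is a basic bridge if this set is nonempty. States of $\mathcal{A}$ are all $((p_1,p_2),q_1,q_2,\ell)$ with $(p_1,p_2)\in Q_{12}$, $q_i\in Q_i$, $\ell\in\{0,\dots,\kappa\}$, $(p_1,p_2,q_1,q_2)$ a basic bridge. For $a\in\Sigma$, $P\in Q_{12}$, $q_i\in Q_i$, there is an $a$-arc from $(P,q_1\cdot\bar a,q_2\cdot\bar a,\ell)$ to $(P\cdot a,q_1,q_2,\ell')$, provided both are states, exactly when: $\ell=\ell'=0$ and $q_1\cdot\bar a\notin F_1$, $q_2\cdot\bar a\notin F_2$; or $\ell=0,\ell'=1$ and ($q_1\cdot\bar a\in F_1$ or $q_2\cdot\bar a\in F_2$); or $1\le\ell<\kappa$ and $\ell'=\ell+1$. Initial states: $((q_{01},q_{02}),q_1',q_2',0)$; final states: those with $\ell=\kappa$. $\mathcal{A}$ is trimmed: states not reachable from an initial state, or from which no final state is reachable, are removed. $S$ is the set of non-trivial strongly connected components of $\mathcal{A}$, i.e. those containing a path $A\xrightarrow{v}A$ with $v$ nonempty; for $s\in S$, $N_s$ is the number of states in $s$. A linear order on the states of $\mathcal{A}$ is fixed; $A_s$ is the least state in $s$, and $v_s$ is a shortest nonempty word with a path $A_s\xrightarrow{v_s}A_s$. *)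

theory Defs
  imports Main "HOL-Library.Sublist"
begin

(* Complete DFA over alphabet 'a with state type 'q (all elements of 'q are states) *)
record ('q, 'a) dfa =
  trans :: "'q \<Rightarrow> 'a \<Rightarrow> 'q"
  init  :: 'q
  fin   :: "'q set"

definition dstar :: "('q \<Rightarrow> 'a \<Rightarrow> 'q) \<Rightarrow> 'q \<Rightarrow> 'a list \<Rightarrow> 'q" where
  "dstar \<delta> p w = foldl \<delta> p w"

definition lang :: "('q, 'a) dfa \<Rightarrow> 'a list set" where
  "lang M = {w. dstar (trans M) (init M) w \<in> fin M}"

definition bar :: "('a \<Rightarrow> 'a) \<Rightarrow> 'a list \<Rightarrow> 'a list" where
  "bar iv w = rev (map iv w)"

definition Hk :: "('a \<Rightarrow> 'a) \<Rightarrow> nat \<Rightarrow> 'a list set \<Rightarrow> 'a list set \<Rightarrow> 'a list set" where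
  "Hk iv k L1 L2 = {\<gamma> @ \<alpha> @ \<beta> @ bar iv \<alpha> @ bar iv \<gamma> | \<gamma> \<alpha> \<beta>.
      length \<alpha> \<ge> k \<and> (\<gamma> @ \<alpha> @ \<beta> @ bar iv \<alpha> \<in> L1 \<or> \<alpha> @ \<beta> @ bar iv \<alpha> @ bar iv \<gamma> \<in> L2)}"

definition regular :: "'a list set \<Rightarrow> bool" where
  "regular L \<longleftrightarrow> (\<exists>(\<delta>::nat \<Rightarrow> 'a \<Rightarrow> nat) q0 (F::nat set) N.
      q0 < N \<and> (\<forall>q<N. \<forall>a. \<delta> q a < N) \<and> L = {w. dstar \<delta> q0 w \<in> F})"

type_synonym ('q1, 'q2) astate = "('q1 \<times> 'q2) \<times> 'q1 \<times> 'q2 \<times> nat"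

definition Q12 :: "('q1, 'a) dfa \<Rightarrow> ('q2, 'a) dfa \<Rightarrow> ('q1 \<times> 'q2) set" where
  "Q12 M1 M2 = {(dstar (trans M1) (init M1) w, dstar (trans M2) (init M2) w) | w. True}"

definition basic_bridge :: "('a \<Rightarrow> 'a) \<Rightarrow> ('q1, 'a) dfa \<Rightarrow> ('q2, 'a) dfa \<Rightarrow> 'q1 \<Rightarrow> 'q2 \<Rightarrow> 'q1 \<Rightarrow> 'q2 \<Rightarrow> bool" where
  "basic_bridge iv M1 M2 p1 p2 q1 q2 \<longleftrightarrow>
     (\<exists>w. dstar (trans M1) p1 w = q1 \<and> dstar (trans M2) p2 (bar iv w) = q2)"

definition AStates :: "('a \<Rightarrow> 'a) \<Rightarrow> nat \<Rightarrow> ('q1, 'a) dfa \<Rightarrow> ('q2, 'a) dfa \<Rightarrow> ('q1, 'q2) astate set" where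
  "AStates iv k M1 M2 = {((p1, p2), q1, q2, l) | p1 p2 q1 q2 l.
      (p1, p2) \<in> Q12 M1 M2 \<and> l \<le> k \<and> basic_bridge iv M1 M2 p1 p2 q1 q2}"

definition AArc :: "('a \<Rightarrow> 'a) \<Rightarrow> nat \<Rightarrow> ('q1, 'a) dfa \<Rightarrow> ('q2, 'a) dfa \<Rightarrow>
    ('q1, 'q2) astate \<Rightarrow> 'a \<Rightarrow> ('q1, 'q2) astate \<Rightarrow> bool" where
  "AArc iv k M1 M2 X a Y \<longleftrightarrow> X \<in> AStates iv k M1 M2 \<and> Y \<in> AStates iv k M1 M2 \<and>
     (\<exists>p1 p2 q1 q2 l l'.
        X = ((p1, p2), trans M1 q1 (iv a), trans M2 q2 (iv a), l) \<and>
        Y = ((trans M1 p1 a, trans M2 p2 a), q1, q2, l') \<and>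
        ((l = 0 \<and> l' = 0 \<and> trans M1 q1 (iv a) \<notin> fin M1 \<and> trans M2 q2 (iv a) \<notin> fin M2) \<or>
         (l = 0 \<and> l' = 1 \<and> (trans M1 q1 (iv a) \<in> fin M1 \<or> trans M2 q2 (iv a) \<in> fin M2)) \<or>
         (1 \<le> l \<and> l < k \<and> l' = l + 1)))"

definition AInit :: "('a \<Rightarrow> 'a) \<Rightarrow> nat \<Rightarrow> ('q1, 'a) dfa \<Rightarrow> ('q2, 'a) dfa \<Rightarrow> ('q1, 'q2) astate set" where
  "AInit iv k M1 M2 = {X \<in> AStates iv k M1 M2. \<exists>q1 q2. X = ((init M1, init M2), q1, q2, 0)}"

definition AFinal :: "('a \<Rightarrow> 'a) \<Rightarrow> nat \<Rightarrow> ('q1, 'a) dfa \<Rightarrow> ('q2, 'a) dfa \<Rightarrow> ('q1, 'q2) astate set" where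
  "AFinal iv k M1 M2 = {X \<in> AStates iv k M1 M2. snd (snd (snd X)) = k}"

definition is_path :: "('s \<Rightarrow> 'a \<Rightarrow> 's \<Rightarrow> bool) \<Rightarrow> 's \<Rightarrow> 'a list \<Rightarrow> 's list \<Rightarrow> 's \<Rightarrow> bool" where
  "is_path E X w xs Y \<longleftrightarrow> length xs = Suc (length w) \<and> xs ! 0 = X \<and> xs ! length w = Y \<and>
     (\<forall>i < length w. E (xs ! i) (w ! i) (xs ! Suc i))"

definition TStates :: "('a \<Rightarrow> 'a) \<Rightarrow> nat \<Rightarrow> ('q1, 'a) dfa \<Rightarrow> ('q2, 'a) dfa \<Rightarrow> ('q1, 'q2) astate set" where
  "TStates iv k M1 M2 = {X.
     (\<exists>I \<in> AInit iv k M1 M2. \<exists>w xs. is_path (AArc iv k M1 M2) I w xs X) \<and>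
     (\<exists>F \<in> AFinal iv k M1 M2. \<exists>w xs. is_path (AArc iv k M1 M2) X w xs F)}"

definition TArc :: "('a \<Rightarrow> 'a) \<Rightarrow> nat \<Rightarrow> ('q1, 'a) dfa \<Rightarrow> ('q2, 'a) dfa \<Rightarrow>
    ('q1, 'q2) astate \<Rightarrow> 'a \<Rightarrow> ('q1, 'q2) astate \<Rightarrow> bool" where
  "TArc iv k M1 M2 X a Y \<longleftrightarrow> AArc iv k M1 M2 X a Y \<and> X \<in> TStates iv k M1 M2 \<and> Y \<in> TStates iv k M1 M2"

definition treach :: "('a \<Rightarrow> 'a) \<Rightarrow> nat \<Rightarrow> ('q1, 'a) dfa \<Rightarrow> ('q2, 'a) dfa \<Rightarrow>
    ('q1, 'q2) astate \<Rightarrow> ('q1, 'q2) astate \<Rightarrow> bool" where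
  "treach iv k M1 M2 X Y \<longleftrightarrow> (\<exists>w xs. is_path (TArc iv k M1 M2) X w xs Y)"

definition scc :: "('a \<Rightarrow> 'a) \<Rightarrow> nat \<Rightarrow> ('q1, 'a) dfa \<Rightarrow> ('q2, 'a) dfa \<Rightarrow>
    ('q1, 'q2) astate \<Rightarrow> ('q1, 'q2) astate set" where
  "scc iv k M1 M2 X = {Y \<in> TStates iv k M1 M2. treach iv k M1 M2 X Y \<and> treach iv k M1 M2 Y X}"

definition SCCs :: "('a \<Rightarrow> 'a) \<Rightarrow> nat \<Rightarrow> ('q1, 'a) dfa \<Rightarrow> ('q2, 'a) dfa \<Rightarrow> ('q1, 'q2) astate set set" where
  "SCCs iv k M1 M2 = {scc iv k M1 M2 X | X. X \<in> TStates iv k M1 M2 \<and>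
      (\<exists>v xs. v \<noteq> [] \<and> is_path (TArc iv k M1 M2) X v xs X)}"

end

theory Submission
  imports Defs
begin


definition finst :: "('q1, 'a) dfa \<Rightarrow> ('q2, 'a) dfa \<Rightarrow> ('q1,'q2) astate \<Rightarrow> bool" where
  "finst M1 M2 X \<longleftrightarrow> fst (snd X) \<in> fin M1 \<or> fst (snd (snd X)) \<in> fin M2"

abbreviation LL :: "('q1,'q2) astate \<Rightarrow> nat" where "LL X \<equiv> snd (snd (snd X))"

lemma AArc_D:
  assumes "AArc iv k M1 M2 X a Y"
  shows "fst (fst Y) = trans M1 (fst (fst X)) a" "snd (fst Y) = trans M2 (snd (fst X)) a"
    "fst (snd X) = trans M1 (fst (snd Y)) (iv a)"
    "fst (snd (snd X)) = trans M2 (fst (snd (snd Y))) (iv a)"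
    "(LL X = 0 \<and> LL Y = 0 \<and> \<not> finst M1 M2 X) \<or> (LL X = 0 \<and> LL Y = 1 \<and> finst M1 M2 X)
     \<or> (1 \<le> LL X \<and> LL X < k \<and> LL Y = LL X + 1)"
    "X \<in> AStates iv k M1 M2" "Y \<in> AStates iv k M1 M2"
  using assms unfolding AArc_def finst_def by auto

lemma dstar_append: "dstar d q (u @ w) = dstar d (dstar d q u) w"
  by (simp add: dstar_def)
lemma dstar_snoc: "dstar d q (u @ [a]) = d (dstar d q u) a"
  by (simp add: dstar_def)
lemma dstar_Nil[simp]: "dstar d q [] = q" by (simp add: dstar_def)

lemma bar_append: "bar iv (u @ w) = bar iv w @ bar iv u" by (simp add: bar_def)
lemma bar_Cons: "bar iv (a # w) = bar iv w @ [iv a]" by (simp add: bar_def)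
lemma bar_Nil[simp]: "bar iv [] = []" by (simp add: bar_def)
lemma length_bar[simp]: "length (bar iv w) = length w" by (simp add: bar_def)
lemma bar_bar: "\<forall>a. iv (iv a) = a \<Longrightarrow> bar iv (bar iv w) = w"
  by (simp add: bar_def rev_map[symmetric] comp_def)

lemma path_nth: "is_path E X w xs Y \<Longrightarrow> i < length w \<Longrightarrow> E (xs!i) (w!i) (xs!Suc i)"
  by (simp add: is_path_def)

lemma path_Nil: "is_path E X [] [X] X" by (simp add: is_path_def)

lemma path_NilD: "is_path E X [] xs Y \<Longrightarrow> Y = X \<and> xs = [X]"
  unfolding is_path_def by (cases xs) auto

lemma path_len: "is_path E X w xs Y \<Longrightarrow> length xs = Suc (length w)"
  by (simp add: is_path_def)
lemma path_0: "is_path E X w xs Y \<Longrightarrow> xs ! 0 = X"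
  by (simp add: is_path_def)
lemma path_end: "is_path E X w xs Y \<Longrightarrow> xs ! length w = Y"
  by (simp add: is_path_def)

lemma path_Cons: "is_path E X (a # w) xs Y \<Longrightarrow> E X a (tl xs!0) \<and> is_path E (tl xs!0) w (tl xs) Y
   \<and> (\<forall>j. xs ! Suc j = tl xs ! j)"
  unfolding is_path_def
  apply (cases xs) apply simp
  by (auto simp: nth_tl)

lemma app_nth_tl: "length xs = Suc n \<Longrightarrow> xs ! n = ys ! 0 \<Longrightarrow> k < length ys \<Longrightarrow> (xs @ tl ys) ! (n + k) = ys ! k"
  by (cases k) (auto simp: nth_append nth_tl)

lemma path_append:
  assumes "is_path E X u xs Y" "is_path E Y w ys Z"
  shows "is_path E X (u @ w) (xs @ tl ys) Z"
proof -
  have lx: "length xs = Suc (length u)" and ly: "length ys = Suc (length w)"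
    using assms by (auto simp: is_path_def)
  have j: "xs ! length u = ys ! 0" using assms by (simp add: is_path_def)
  have key: "\<And>k. k \<le> length w \<Longrightarrow> (xs @ tl ys) ! (length u + k) = ys ! k"
    using app_nth_tl[OF lx j] ly by simp
  show ?thesis unfolding is_path_def
  proof (intro conjI allI impI)
    show "length (xs @ tl ys) = Suc (length (u @ w))" using lx ly by simp
    show "(xs @ tl ys) ! 0 = X" using assms lx by (simp add: is_path_def nth_append)
    show "(xs @ tl ys) ! length (u @ w) = Z" using key[of "length w"] assms by (simp add: is_path_def)
    fix i assume i: "i < length (u @ w)"
    show "E ((xs @ tl ys) ! i) ((u @ w) ! i) ((xs @ tl ys) ! Suc i)"
    proof (cases "i < length u")
      case True
      then show ?thesis using assms lx by (simp add: is_path_def nth_append)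
    next
      case False
      then obtain k where k: "i = length u + k" "k < length w" using i
        by (metis add_diff_inverse_nat length_append nat_add_left_cancel_less)
      have "E (ys ! k) (w ! k) (ys ! Suc k)" using assms(2) k by (simp add: is_path_def)
      moreover have "(xs @ tl ys) ! Suc i = ys ! Suc k" using key[of "Suc k"] k by simp
      ultimately show ?thesis using key[of k] k by (simp add: nth_append)
    qed
  qed
qed

lemma path_split:
  assumes "is_path E X w xs Y" "i \<le> length w"
  shows "is_path E X (take i w) (take (Suc i) xs) (xs ! i)"
    "is_path E (xs ! i) (drop i w) (drop i xs) Y"
  using assms unfolding is_path_def by (auto simp: min_def)

lemma path_mono: "is_path E X w xs Y \<Longrightarrow> (\<And>a b c. E a b c \<Longrightarrow> E' a b c) \<Longrightarrow> is_path E' X w xs Y"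
  by (simp add: is_path_def)

lemma path_pow: "is_path E X u xs X \<Longrightarrow> \<exists>ys. is_path E X (concat (replicate n u)) ys X"
proof (induction n)
  case 0 then show ?case using path_Nil by fastforce
next
  case (Suc n) then obtain ys where "is_path E X (concat (replicate n u)) ys X" by blast
  from path_append[OF Suc.prems this] show ?case by auto
qed



lemma path_P:
  assumes "is_path (AArc iv k M1 M2) X w xs Y"
  shows "j \<le> length w \<Longrightarrow> fst (fst (xs!j)) = dstar (trans M1) (fst (fst X)) (take j w)
      \<and> snd (fst (xs!j)) = dstar (trans M2) (snd (fst X)) (take j w)"
proof (induction j)
  case 0 then show ?case using path_0[OF assms] by simp
next
  case (Suc j)
  have a: "AArc iv k M1 M2 (xs!j) (w!j) (xs!Suc j)" using path_nth[OF assms] Suc by simp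
  show ?case using Suc AArc_D(1,2)[OF a] by (simp add: take_Suc_conv_app_nth dstar_snoc)
qed

lemma path_q:
  assumes "is_path (AArc iv k M1 M2) X w xs Y"
  shows "j \<le> length w \<Longrightarrow> fst (snd (xs!j)) = dstar (trans M1) (fst (snd Y)) (bar iv (drop j w))
      \<and> fst (snd (snd (xs!j))) = dstar (trans M2) (fst (snd (snd Y))) (bar iv (drop j w))"
proof (induction "length w - j" arbitrary: j)
  case 0 then have "j = length w" by simp
  then show ?case using path_end[OF assms] by simp
next
  case (Suc m)
  then have j: "j < length w" by simp
  have IH: "fst (snd (xs!Suc j)) = dstar (trans M1) (fst (snd Y)) (bar iv (drop (Suc j) w))
      \<and> fst (snd (snd (xs!Suc j))) = dstar (trans M2) (fst (snd (snd Y))) (bar iv (drop (Suc j) w))"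
    using Suc j by simp
  have a: "AArc iv k M1 M2 (xs!j) (w!j) (xs!Suc j)" using path_nth[OF assms] j by simp
  have d: "drop j w = w!j # drop (Suc j) w" using j by (simp add: Cons_nth_drop_Suc)
  show ?case using IH AArc_D(3,4)[OF a] by (simp add: d bar_Cons dstar_snoc)
qed

lemma path_L_pos:
  "is_path (AArc iv k M1 M2) X w xs Y \<Longrightarrow> 1 \<le> LL X \<Longrightarrow> LL Y = LL X + length w"
proof (induction w arbitrary: X xs)
  case Nil then show ?case using path_NilD by fastforce
next
  case (Cons a w)
  note c = path_Cons[OF Cons.prems(1)]
  have "LL (tl xs!0) = LL X + 1" using AArc_D(5)[of iv k M1 M2 X a "tl xs!0"] c Cons.prems(2) by auto
  then show ?case using Cons.IH[of "tl xs!0" "tl xs"] c by simp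
qed

lemma path_L_zero:
  "is_path (AArc iv k M1 M2) X w xs Y \<Longrightarrow> LL Y = 0 \<Longrightarrow> \<forall>j \<le> length w. LL (xs!j) = 0"
proof (induction w arbitrary: X xs)
  case Nil then show ?case using path_NilD by fastforce
next
  case (Cons a w)
  note c = path_Cons[OF Cons.prems(1)]
  have t: "\<forall>j\<le>length w. LL (tl xs ! j) = 0" using Cons.IH[of "tl xs!0" "tl xs"] c Cons.prems by simp
  then have "LL (tl xs!0) = 0" by simp
  then have "LL X = 0" using AArc_D(5)[of iv k M1 M2 X a "tl xs!0"] c by auto
  then have x0: "LL (xs!0) = 0" using path_0[OF Cons.prems(1)] by simp
  show ?case
  proof (intro allI impI)
    fix j assume "j \<le> length (a#w)"
    then show "LL (xs!j) = 0" using x0 t c by (cases j) auto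
  qed
qed

lemma path_L_final:
  "is_path (AArc iv k M1 M2) X w xs Y \<Longrightarrow> LL X = 0 \<Longrightarrow> LL Y = k \<Longrightarrow> 0 < k \<Longrightarrow>
    k \<le> length w \<and> (\<forall>j < length w - k. \<not> finst M1 M2 (xs!j)) \<and> finst M1 M2 (xs!(length w - k))"
proof (induction w arbitrary: X xs)
  case Nil then show ?case using path_NilD by fastforce
next
  case (Cons a w)
  note c = path_Cons[OF Cons.prems(1)]
  have x0: "xs!0 = X" using path_0[OF Cons.prems(1)] .
  from AArc_D(5)[of iv k M1 M2 X a "tl xs!0"] c Cons.prems(2)
  consider "LL (tl xs!0) = 0" "\<not> finst M1 M2 X" | "LL (tl xs!0) = 1" "finst M1 M2 X" by auto
  then show ?case
  proof cases
    case 1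
    have IH: "k \<le> length w \<and> (\<forall>j < length w - k. \<not> finst M1 M2 (tl xs!j)) \<and> finst M1 M2 (tl xs!(length w - k))"
      using Cons.IH[of "tl xs!0" "tl xs"] c Cons.prems 1 by simp
    have e: "length (a#w) - k = Suc (length w - k)" using IH by (simp add: Suc_diff_le)
    show ?thesis
    proof (intro conjI allI impI)
      show "k \<le> length (a#w)" using IH by simp
      fix j assume "j < length (a # w) - k"
      then show "\<not> finst M1 M2 (xs!j)" using IH 1 c x0 e by (cases j) auto
    next
      show "finst M1 M2 (xs ! (length (a # w) - k))" using IH c e by simp
    qed
  next
    case 2
    have "LL Y = 1 + length w" using path_L_pos[of iv k M1 M2 "tl xs!0" w "tl xs" Y] c 2 by simp
    then have "length (a#w) - k = 0" "k \<le> length (a#w)" using Cons.prems by auto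
    then show ?thesis using 2 x0 by simp
  qed
qed

lemma loop_L0: "is_path (AArc iv k M1 M2) X w xs X \<Longrightarrow> w \<noteq> [] \<Longrightarrow> LL X = 0"
  using path_L_pos[of iv k M1 M2 X w xs X] by (cases "LL X") auto

lemma astate_eq: "fst (fst A) = fst (fst B) \<Longrightarrow> snd (fst A) = snd (fst B) \<Longrightarrow> fst (snd A) = fst (snd B)
  \<Longrightarrow> fst (snd (snd A)) = fst (snd (snd B)) \<Longrightarrow> snd (snd (snd A)) = snd (snd (snd B)) \<Longrightarrow> A = (B::('q1,'q2) astate)"
  by (simp add: prod_eq_iff)

lemma path_unique:
  assumes "is_path (AArc iv k M1 M2) X w xs Y" "is_path (AArc iv k M1 M2) X w ys Y" "LL Y = 0"
  shows "xs = ys"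
proof (rule nth_equalityI)
  show "length xs = length ys" using assms by (simp add: is_path_def)
  fix j assume "j < length xs"
  then have j: "j \<le> length w" using assms by (simp add: is_path_def)
  show "xs ! j = ys ! j"
    using path_P[OF assms(1) j] path_P[OF assms(2) j] path_q[OF assms(1) j] path_q[OF assms(2) j]
      path_L_zero[OF assms(1,3)] path_L_zero[OF assms(2,3)] j
    by (intro astate_eq) auto
qed



lemma pw_pow: "y \<noteq> [] \<Longrightarrow> prefix w (y @ w) \<Longrightarrow> \<exists>N. prefix w (concat (replicate N y))"
proof (induction "length w" arbitrary: w rule: less_induct)
  case less
  show ?case
  proof (cases "length w \<le> length y")
    case True
    have "prefix w y" using prefix_length_prefix[OF less.prems(2), of y] True by simp
    then show ?thesis by (rule_tac x=1 in exI) simp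
  next
    case False
    obtain z where z: "y @ w = w @ z" using less.prems(2) by (auto simp: prefix_def)
    define w2 where "w2 = drop (length y) w"
    have "take (length y) (y @ w) = take (length y) (w @ z)" using z by simp
    then have ty: "take (length y) w = y" using False by simp
    then have ww: "w = y @ w2" unfolding w2_def by (metis append_take_drop_id)
    have "prefix (y @ w2) (y @ (y @ w2))" using less.prems(2) ww by simp
    then have p2: "prefix w2 (y @ w2)" by simp
    have "length w2 < length w" using ww less.prems(1) by simp
    then obtain N where "prefix w2 (concat (replicate N y))" using less.hyps p2 less.prems(1) by blast
    then have "prefix w (concat (replicate (Suc N) y))" using ww by simp
    then show ?thesis by blast
  qed
qed

lemma concat_rep_mult: "concat (replicate N (concat (replicate p u))) = concat (replicate (N*p) u)"
  by (induction N) (auto simp: replicate_add)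

lemma dstar_lt: "(\<forall>q<N. \<forall>a. \<delta> q a < N) \<Longrightarrow> q < N \<Longrightarrow> dstar \<delta> q y < N"
  by (induction y arbitrary: q) (auto simp: dstar_def)

lemma pump:
  assumes "(\<forall>q<N. \<forall>a. \<delta> q a < (N::nat))" "q0 < N"
  shows "\<exists>n p. 0 < p \<and> dstar \<delta> q0 (x0 @ concat (replicate n u)) = dstar \<delta> q0 (x0 @ concat (replicate (n+p) u))"
proof -
  define f where "f j = dstar \<delta> q0 (x0 @ concat (replicate j u))" for j
  have "f ` {..N} \<subseteq> {..<N}" using dstar_lt[OF assms] unfolding f_def by auto
  then have "card (f ` {..N}) \<le> N" by (metis card_lessThan card_mono finite_lessThan)
  then have "\<not> inj_on f {..N}" using card_image by fastforce
  then obtain j1 j2 where j: "j1 \<noteq> j2" "f j1 = f j2" unfolding inj_on_def by blast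
  show ?thesis
  proof (cases "j1 < j2")
    case True then show ?thesis using j unfolding f_def
      by (rule_tac x=j1 in exI, rule_tac x="j2-j1" in exI) auto
  next
    case False then have "j2 < j1" using j by simp
    then show ?thesis using j unfolding f_def
      by (rule_tac x=j2 in exI, rule_tac x="j1-j2" in exI) auto
  qed
qed

lemma AStates_bridge: "F \<in> AStates iv k M1 M2 \<Longrightarrow>
   \<exists>\<beta>. dstar (trans M1) (fst (fst F)) \<beta> = fst (snd F) \<and> dstar (trans M2) (snd (fst F)) (bar iv \<beta>) = fst (snd (snd F))"
  by (auto simp: AStates_def basic_bridge_def)

lemma bar_inj: "\<forall>a. iv (iv a) = a \<Longrightarrow> bar iv x = bar iv y \<Longrightarrow> x = y"
  by (metis bar_bar)

lemma core:
  assumes inv: "\<forall>a. iv (iv a) = a" and kp: "\<kappa> > 0"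
    and l1: "lang M1 = L1" and l2: "lang M2 = bar iv ` L2"
    and reg: "regular (Hk iv \<kappa> L1 L2)"
    and I: "I \<in> AInit iv \<kappa> M1 M2" and p0: "is_path (AArc iv \<kappa> M1 M2) I x0 ys0 X"
    and lp: "is_path (AArc iv \<kappa> M1 M2) X u us X" and un: "u \<noteq> []"
    and pw: "is_path (AArc iv \<kappa> M1 M2) X w ws F" and Fin: "F \<in> AFinal iv \<kappa> M1 M2"
  shows "\<exists>N. prefix w (concat (replicate N u))"
proof -
  let ?E = "AArc iv \<kappa> M1 M2"
  let ?t1 = "trans M1" and ?t2 = "trans M2"
  obtain \<delta> :: "nat \<Rightarrow> _ \<Rightarrow> nat" and q0 :: nat and Fd and N :: nat where cl: "\<forall>q<N. \<forall>a. \<delta> q a < N" and q0: "q0 < N"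
    and H: "Hk iv \<kappa> L1 L2 = {w. dstar \<delta> q0 w \<in> Fd}"
    using reg unfolding regular_def by blast
  obtain n p where pp: "0 < p" and eqd: "dstar \<delta> q0 (x0 @ concat (replicate n u)) = dstar \<delta> q0 (x0 @ concat (replicate (n+p) u))"
    using pump[OF cl q0] by blast
  obtain rn where rn: "is_path ?E X (concat (replicate n u)) rn X" using path_pow[OF lp] by blast
  obtain rp where rp: "is_path ?E X (concat (replicate (n+p) u)) rp X" using path_pow[OF lp] by blast
  define Z0 where "Z0 = x0 @ concat (replicate n u) @ w"
  define Zp where "Zp = x0 @ concat (replicate (n+p) u) @ w"
  obtain xs0 where xs0: "is_path ?E I Z0 xs0 F"
    using path_append[OF p0 path_append[OF rn pw]] unfolding Z0_def by blast
  obtain xsp where xsp: "is_path ?E I Zp xsp F"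
    using path_append[OF p0 path_append[OF rp pw]] unfolding Zp_def by blast
  have LI: "LL I = 0" and PI: "fst (fst I) = init M1" "snd (fst I) = init M2"
    using I by (auto simp: AInit_def)
  have LF: "LL F = \<kappa>" and FS: "F \<in> AStates iv \<kappa> M1 M2" using Fin by (auto simp: AFinal_def)
  obtain \<beta> where b1: "dstar ?t1 (fst (fst F)) \<beta> = fst (snd F)"
    and b2: "dstar ?t2 (snd (fst F)) (bar iv \<beta>) = fst (snd (snd F))"
    using AStates_bridge[OF FS] by blast
  have PF0: "fst (fst F) = dstar ?t1 (init M1) Z0" "snd (fst F) = dstar ?t2 (init M2) Z0"
    using path_P[OF xs0, of "length Z0"] path_end[OF xs0] PI by auto
  have PFp: "fst (fst F) = dstar ?t1 (init M1) Zp" "snd (fst F) = dstar ?t2 (init M2) Zp"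
    using path_P[OF xsp, of "length Zp"] path_end[OF xsp] PI by auto
  note f0 = path_L_final[OF xs0 LI LF kp]
  note fp = path_L_final[OF xsp LI LF kp]
  have q0g: "\<And>g. g \<le> length Z0 \<Longrightarrow> fst (snd (xs0!g)) = dstar ?t1 (init M1) (Z0 @ \<beta> @ bar iv (drop g Z0))"
    using path_q[OF xs0] b1 PF0 by (simp add: dstar_append)
  have q0g2: "\<And>g. g \<le> length Z0 \<Longrightarrow> fst (snd (snd (xs0!g))) = dstar ?t2 (init M2) (Z0 @ bar iv \<beta> @ bar iv (drop g Z0))"
    using path_q[OF xs0] b2 PF0 by (simp add: dstar_append)
  have qpg1: "\<And>g. g \<le> length Zp \<Longrightarrow> fst (snd (xsp!g)) = dstar ?t1 (init M1) (Z0 @ \<beta> @ bar iv (drop g Zp))"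
    using path_q[OF xsp] b1 PF0 by (simp add: dstar_append)
  have qpg2: "\<And>g. g \<le> length Zp \<Longrightarrow> fst (snd (snd (xsp!g))) = dstar ?t2 (init M2) (Z0 @ bar iv \<beta> @ bar iv (drop g Zp))"
    using path_q[OF xsp] b2 PF0 by (simp add: dstar_append)
  have q0g1': "\<And>g. g \<le> length Z0 \<Longrightarrow> fst (snd (xs0!g)) = dstar ?t1 (init M1) (Zp @ \<beta> @ bar iv (drop g Z0))"
    using path_q[OF xs0] b1 PFp by (simp add: dstar_append)
  define m where "m = length Z0 - \<kappa>"
  define \<gamma> where "\<gamma> = take m Z0"
  define \<alpha> where "\<alpha> = drop m Z0"
  have Z0ga: "Z0 = \<gamma> @ \<alpha>" unfolding \<gamma>_def \<alpha>_def by simp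
  have la: "length \<alpha> = \<kappa>" using f0 unfolding \<alpha>_def m_def by simp
  have mle: "m \<le> length Z0" unfolding m_def by simp
  have V0: "Z0 @ \<beta> @ bar iv Z0 \<in> Hk iv \<kappa> L1 L2"
  proof -
    have fm: "finst M1 M2 (xs0 ! m)" using f0 unfolding m_def by simp
    have "\<gamma> @ \<alpha> @ \<beta> @ bar iv \<alpha> \<in> L1 \<or> \<alpha> @ \<beta> @ bar iv \<alpha> @ bar iv \<gamma> \<in> L2"
    proof (cases "fst (snd (xs0!m)) \<in> fin M1")
      case True
      then have "dstar ?t1 (init M1) (Z0 @ \<beta> @ bar iv \<alpha>) \<in> fin M1"
        using q0g[OF mle] unfolding \<alpha>_def by simp
      then show ?thesis using l1 Z0ga unfolding lang_def by auto
    next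
      case False
      then have "fst (snd (snd (xs0!m))) \<in> fin M2" using fm unfolding finst_def by simp
      then have "dstar ?t2 (init M2) (Z0 @ bar iv \<beta> @ bar iv \<alpha>) \<in> fin M2"
        using q0g2[OF mle] unfolding \<alpha>_def by simp
      then have "Z0 @ bar iv \<beta> @ bar iv \<alpha> \<in> bar iv ` L2" using l2 unfolding lang_def by auto
      then obtain y where y: "y \<in> L2" "bar iv y = Z0 @ bar iv \<beta> @ bar iv \<alpha>" by auto
      have "bar iv (\<alpha> @ \<beta> @ bar iv \<alpha> @ bar iv \<gamma>) = Z0 @ bar iv \<beta> @ bar iv \<alpha>"
        using Z0ga by (simp add: bar_append bar_bar[OF inv])
      then have "\<alpha> @ \<beta> @ bar iv \<alpha> @ bar iv \<gamma> = y" using y bar_inj[OF inv] by metis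
      then show ?thesis using y by simp
    qed
    moreover have "Z0 @ \<beta> @ bar iv Z0 = \<gamma> @ \<alpha> @ \<beta> @ bar iv \<alpha> @ bar iv \<gamma>"
      using Z0ga by (simp add: bar_append)
    ultimately show ?thesis unfolding Hk_def using la by fastforce
  qed
  define W where "W = Zp @ \<beta> @ bar iv Z0"
  have "dstar \<delta> q0 W = dstar \<delta> q0 (Z0 @ \<beta> @ bar iv Z0)"
    unfolding W_def Zp_def Z0_def using eqd by (simp add: dstar_append)
  then have WH: "W \<in> Hk iv \<kappa> L1 L2" using V0 H by auto
  then obtain g' a' b' where Wd: "W = g' @ a' @ b' @ bar iv a' @ bar iv g'" and la': "\<kappa> \<le> length a'"
    and cond: "g' @ a' @ b' @ bar iv a' \<in> L1 \<or> a' @ b' @ bar iv a' @ bar iv g' \<in> L2"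
    unfolding Hk_def by blast
  have lZ: "length Z0 \<le> length Zp" unfolding Z0_def Zp_def by (simp add: replicate_add)
  show ?thesis
  proof (cases "length Z0 \<le> length (g' @ a')")
    case True
    define T where "T = bar iv (g' @ a')"
    have sT: "suffix T W" unfolding T_def Wd suffix_def by (rule_tac x="g' @ a' @ b'" in exI) (simp add: bar_append)
    have sZ: "suffix (bar iv Z0) W" unfolding W_def suffix_def by (rule_tac x="Zp @ \<beta>" in exI) simp
    have "suffix (bar iv Z0) T" using suffix_length_suffix[OF sZ sT] True unfolding T_def by simp
    then obtain y where "T = y @ bar iv Z0" unfolding suffix_def by blast
    then have "g' @ a' = Z0 @ bar iv y" unfolding T_def using bar_inj[OF inv]
      by (metis bar_append bar_bar[OF inv])
    then have "prefix Z0 W" unfolding Wd by (metis append.assoc prefixI)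
    moreover have "prefix Zp W" unfolding W_def by simp
    ultimately have "prefix Z0 Zp" using prefix_length_prefix lZ by blast
    then have "prefix w (concat (replicate p u) @ w)"
      unfolding Z0_def Zp_def by (simp add: replicate_add)
    moreover have "concat (replicate p u) \<noteq> []" using pp un by (cases p) auto
    ultimately obtain N where "prefix w (concat (replicate N (concat (replicate p u))))"
      using pw_pow by blast
    then show ?thesis unfolding concat_rep_mult by blast
  next
    case False
    define g where "g = length g'"
    have gl: "g < length Z0 - \<kappa>" using False la' unfolding g_def by simp
    have glp: "g \<le> length Zp" using gl lZ by simp
    show ?thesis
    proof (cases "g' @ a' @ b' @ bar iv a' \<in> L1")
      case True
      have "bar iv Z0 = bar iv (drop g Z0) @ bar iv (take g Z0)"
        by (metis append_take_drop_id bar_append)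
      then have "(g' @ a' @ b' @ bar iv a') @ bar iv g' = (Zp @ \<beta> @ bar iv (drop g Z0)) @ bar iv (take g Z0)"
        using Wd unfolding W_def by simp
      moreover have "length (bar iv g') = length (bar iv (take g Z0))" using gl unfolding g_def by simp
      ultimately have "g' @ a' @ b' @ bar iv a' = Zp @ \<beta> @ bar iv (drop g Z0)"
        using append_eq_append_conv by blast
      then have "dstar ?t1 (init M1) (Zp @ \<beta> @ bar iv (drop g Z0)) \<in> fin M1"
        using True l1 unfolding lang_def by auto
      then have "finst M1 M2 (xs0 ! g)" using q0g1'[of g] gl unfolding finst_def by simp
      then show ?thesis using f0 gl by blast
    next
      case False
      then have c2: "a' @ b' @ bar iv a' @ bar iv g' \<in> L2" using cond by simp
      have "g' @ (a' @ b' @ bar iv a' @ bar iv g') = take g Zp @ (drop g Zp @ \<beta> @ bar iv Z0)"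
        using Wd unfolding W_def by (metis append.assoc append_take_drop_id)
      moreover have "length g' = length (take g Zp)" using glp unfolding g_def by simp
      ultimately have "a' @ b' @ bar iv a' @ bar iv g' = drop g Zp @ \<beta> @ bar iv Z0"
        using append_eq_append_conv by blast
      then have "drop g Zp @ \<beta> @ bar iv Z0 \<in> L2" using c2 by simp
      then have "bar iv (drop g Zp @ \<beta> @ bar iv Z0) \<in> lang M2" using l2 by simp
      moreover have "bar iv (drop g Zp @ \<beta> @ bar iv Z0) = Z0 @ bar iv \<beta> @ bar iv (drop g Zp)"
        by (simp add: bar_append bar_bar[OF inv])
      ultimately have "dstar ?t2 (init M2) (Z0 @ bar iv \<beta> @ bar iv (drop g Zp)) \<in> fin M2"
        unfolding lang_def by simp
      then have "finst M1 M2 (xsp ! g)" using qpg2[OF glp] unfolding finst_def by simp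
      moreover have "g < length Zp - \<kappa>" using gl lZ by simp
      ultimately show ?thesis using fp by blast
    qed
  qed
qed



lemma TA: "is_path (TArc iv k M1 M2) X w xs Y \<Longrightarrow> is_path (AArc iv k M1 M2) X w xs Y"
  by (erule path_mono) (simp add: TArc_def)

lemma treach_trans: "treach iv k M1 M2 X Y \<Longrightarrow> treach iv k M1 M2 Y Z \<Longrightarrow> treach iv k M1 M2 X Z"
proof -
  assume "treach iv k M1 M2 X Y" "treach iv k M1 M2 Y Z"
  then obtain w1 xs1 w2 xs2 where "is_path (TArc iv k M1 M2) X w1 xs1 Y" "is_path (TArc iv k M1 M2) Y w2 xs2 Z"
    unfolding treach_def by blast
  from path_append[OF this] show ?thesis unfolding treach_def by blast
qed

lemma prefix_rep_mono: "N \<le> M \<Longrightarrow> prefix (concat (replicate N v)) (concat (replicate M v))"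
  by (metis le_add_diff_inverse replicate_add concat_append prefixI)

lemma peq: "prefix x (concat (replicate N v)) \<Longrightarrow> prefix y (concat (replicate M v)) \<Longrightarrow> length x = length y \<Longrightarrow> x = y"
proof -
  assume a: "prefix x (concat (replicate N v))" "prefix y (concat (replicate M v))" "length x = length y"
  have "prefix x (concat (replicate (N+M) v))" "prefix y (concat (replicate (N+M) v))"
    using a prefix_rep_mono[of N "N+M" v] prefix_rep_mono[of M "N+M" v] by (auto intro: prefix_order.trans)
  then have "prefix x y" using prefix_length_prefix[of x _ y] a(3) by simp
  then obtain z where "y = x @ z" by (auto simp: prefix_def)
  then show "x = y" using a(3) by simp
qed

lemma rep_snoc: "concat (replicate m v) @ v = concat (replicate (Suc m) v)"
  by (induction m) auto



theorem lemma5: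
  fixes iv :: "'a::finite \<Rightarrow> 'a" and \<kappa> :: nat
    and M1 :: "('q1::finite, 'a) dfa" and M2 :: "('q2::finite, 'a) dfa"
    and L1 L2 :: "'a list set"
    and r :: "('q1, 'q2) astate rel"
    and s :: "('q1, 'q2) astate set" and As :: "('q1, 'q2) astate"
    and v :: "'a list"
  assumes "card (UNIV :: 'a set) \<ge> 2"
    and "\<forall>a. iv (iv a) = a"
    and "\<kappa> > 0"
    and "lang M1 = L1"
    and "lang M2 = bar iv ` L2"
    and "regular (Hk iv \<kappa> L1 L2)"
    and "linear_order_on (TStates iv \<kappa> M1 M2) r"
    and "s \<in> SCCs iv \<kappa> M1 M2"
    and "As \<in> s" and "\<forall>B \<in> s. (As, B) \<in> r"
    and "v \<noteq> []" and "\<exists>xs. is_path (TArc iv \<kappa> M1 M2) As v xs As"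
    and "\<forall>u. u \<noteq> [] \<and> (\<exists>xs. is_path (TArc iv \<kappa> M1 M2) As u xs As) \<longrightarrow> length v \<le> length u"
  shows "(\<forall>w xs F. is_path (TArc iv \<kappa> M1 M2) As w xs F \<and> F \<in> AFinal iv \<kappa> M1 M2 \<longrightarrow>
            (\<exists>n \<ge> 1. prefix w (concat (replicate n v))))
    \<and> (\<forall>u. u \<noteq> [] \<and> (\<exists>xs. is_path (TArc iv \<kappa> M1 M2) As u xs As) \<and> length u = length v \<longrightarrow> u = v)
    \<and> (\<forall>xs. is_path (TArc iv \<kappa> M1 M2) As v xs As \<longrightarrow>
            (\<forall>B \<in> s - {As}. card {i. i \<le> length v \<and> xs ! i = B} = 1))
    \<and> length v = card s"
proof -
  let ?T = "TArc iv \<kappa> M1 M2" and ?A = "AArc iv \<kappa> M1 M2"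
  note inv = assms(2) and kp = assms(3) and l1 = assms(4) and l2 = assms(5) and reg = assms(6)
  note sS = assms(8) and Ass = assms(9) and vne = assms(11) and vl = assms(12) and vmin = assms(13)
  obtain X0 where s: "s = scc iv \<kappa> M1 M2 X0" using sS unfolding SCCs_def by blast
  have schar: "\<And>Y. Y \<in> s \<longleftrightarrow> Y \<in> TStates iv \<kappa> M1 M2 \<and> treach iv \<kappa> M1 M2 As Y \<and> treach iv \<kappa> M1 M2 Y As"
    using Ass unfolding s scc_def by (auto intro: treach_trans)
  have AsT: "As \<in> TStates iv \<kappa> M1 M2" using Ass schar by blast
  obtain I x0 ys0 where I: "I \<in> AInit iv \<kappa> M1 M2" and p0: "is_path ?A I x0 ys0 As"
    using AsT unfolding TStates_def by blast
  obtain F0 w0 ws0 where F0: "F0 \<in> AFinal iv \<kappa> M1 M2" and pw0: "is_path ?A As w0 ws0 F0"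
    using AsT unfolding TStates_def by blast
  obtain vxs where vxs: "is_path ?T As v vxs As" using vl by blast
  have LAs: "LL As = 0" using loop_L0[OF TA[OF vxs] vne] .
  have CLv: "\<And>w ws F. is_path ?A As w ws F \<Longrightarrow> F \<in> AFinal iv \<kappa> M1 M2 \<Longrightarrow> \<exists>N. prefix w (concat (replicate N v))"
    using core[OF inv kp l1 l2 reg I p0 TA[OF vxs] vne] by blast
  have c1: "\<forall>w xs F. is_path ?T As w xs F \<and> F \<in> AFinal iv \<kappa> M1 M2 \<longrightarrow>
            (\<exists>n \<ge> 1. prefix w (concat (replicate n v)))"
  proof (intro allI impI)
    fix w xs F assume a: "is_path ?T As w xs F \<and> F \<in> AFinal iv \<kappa> M1 M2"
    then obtain N where "prefix w (concat (replicate N v))" using CLv TA by blast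
    then have "prefix w (concat (replicate (Suc N) v))"
      using prefix_rep_mono[of N "Suc N" v] by (auto intro: prefix_order.trans)
    then show "\<exists>n \<ge> 1. prefix w (concat (replicate n v))" by (rule_tac x="Suc N" in exI) simp
  qed
  have c2: "\<forall>u. u \<noteq> [] \<and> (\<exists>xs. is_path ?T As u xs As) \<and> length u = length v \<longrightarrow> u = v"
  proof (intro allI impI)
    fix u assume a: "u \<noteq> [] \<and> (\<exists>xs. is_path ?T As u xs As) \<and> length u = length v"
    then obtain us where us: "is_path ?T As u us As" by blast
    obtain N where "prefix (u @ w0) (concat (replicate N v))"
      using CLv[OF path_append[OF TA[OF us] pw0] F0] by blast
    moreover have "prefix u (u @ w0)" by simp
    ultimately have "prefix u (concat (replicate N v))" using prefix_order.trans by blast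
    moreover have "prefix v (concat (replicate 1 v))" by simp
    ultimately show "u = v" using peq a by blast
  qed
  have loops: "u \<noteq> [] \<Longrightarrow> is_path ?T As u us As \<Longrightarrow> \<exists>m. u = concat (replicate m v)" for u us
  proof (induction "length u" arbitrary: u us rule: less_induct)
    case less
    note us = less.prems(2)
    have min: "length v \<le> length u" using vmin less.prems by blast
    have lvpos0: "0 < length v" using vne by simp
    obtain N1 where "prefix (u @ v @ w0) (concat (replicate N1 v))"
      using CLv[OF path_append[OF TA[OF us] path_append[OF TA[OF vxs] pw0]] F0] by blast
    then have n1: "prefix (u @ v) (concat (replicate N1 v))" by (metis append.assoc prefixI prefix_order.trans)
    obtain N2 where "prefix (v @ u @ w0) (concat (replicate N2 v))"
      using CLv[OF path_append[OF TA[OF vxs] path_append[OF TA[OF us] pw0]] F0] by blast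
    then have n2: "prefix (v @ u) (concat (replicate N2 v))" by (metis append.assoc prefixI prefix_order.trans)
    have uv: "u @ v = v @ u" using peq[OF n1 n2] by simp
    have q1: "is_path ?A As (u @ v) (us @ tl vxs) As" using path_append[OF TA[OF us] TA[OF vxs]] .
    have q2: "is_path ?A As (u @ v) (vxs @ tl us) As" using path_append[OF TA[OF vxs] TA[OF us]] uv by simp
    have eq: "us @ tl vxs = vxs @ tl us" using path_unique[OF q1 q2 LAs] .
    have lus: "length us = Suc (length u)" using path_len[OF us] .
    have lvxs: "length vxs = Suc (length v)" using path_len[OF vxs] .
    have "(us @ tl vxs) ! length u = As" using lus path_end[OF us] by (simp add: nth_append)
    moreover have "(vxs @ tl us) ! (length v + (length u - length v)) = us ! (length u - length v)"
      using app_nth_tl[OF lvxs] path_end[OF vxs] path_0[OF us] lus by simp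
    ultimately have mid: "us ! (length u - length v) = As" using eq min by simp
    show ?case
    proof (cases "length u = length v")
      case True then show ?thesis using c2 less.prems by (rule_tac x=1 in exI) auto
    next
      case False
      define k where "k = length u - length v"
      have k: "0 < k" "k \<le> length u" using False min unfolding k_def by auto
      have pa: "is_path ?T As (take k u) (take (Suc k) us) As"
        using path_split(1)[OF us k(2)] mid unfolding k_def by simp
      have pb: "is_path ?T As (drop k u) (drop k us) As"
        using path_split(2)[OF us k(2)] mid unfolding k_def by simp
      have kl: "k < length u" using lvpos0 min False unfolding k_def by linarith
      have "take k u \<noteq> []" "length (take k u) < length u" using k kl by auto
      then obtain m where m: "take k u = concat (replicate m v)" using less.hyps pa by blast
      have "drop k u \<noteq> []" using kl by simp
      moreover have "length (drop k u) = length v" using min unfolding k_def by simp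
      ultimately have "drop k u = v" using c2 pb by blast
      then have "u = concat (replicate m v) @ v" using m by (metis append_take_drop_id)
      then show ?thesis by (rule_tac x="Suc m" in exI) (simp add: rep_snoc)
    qed
  qed
  have splice: "\<And>xs i j. is_path ?T As v xs As \<Longrightarrow> i < j \<Longrightarrow> j \<le> length v \<Longrightarrow> xs!i = xs!j
      \<Longrightarrow> 0 < i \<or> j < length v \<Longrightarrow> False"
  proof -
    fix xs i j assume a: "is_path ?T As v xs As" "i < j" "j \<le> length v" "xs!i = xs!j" "0 < i \<or> j < length v"
    have "is_path ?T As (take i v) (take (Suc i) xs) (xs!i)" using path_split(1)[OF a(1)] a(2,3) path_0[OF a(1)] by simp
    moreover have "is_path ?T (xs!i) (drop j v) (drop j xs) As" using path_split(2)[OF a(1) a(3)] a(4) by simp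
    ultimately have p: "is_path ?T As (take i v @ drop j v) (take (Suc i) xs @ tl (drop j xs)) As" by (rule path_append)
    have "take i v @ drop j v \<noteq> []" using a(2,3,5) by auto
    moreover have "length (take i v @ drop j v) < length v" using a(2,3) by auto
    ultimately have "length v \<le> length (take i v @ drop j v)" using vmin p by blast
    then show False using \<open>length (take i v @ drop j v) < length v\<close> by simp
  qed
  have rep: "\<And>xs m Q. is_path ?T As v xs As \<Longrightarrow> is_path ?A As (concat (replicate m v)) Q As \<Longrightarrow>
      \<forall>i \<le> m * length v. Q!i = xs!(i mod length v)"
  proof -
    fix xs m Q assume pv: "is_path ?T As v xs As"
    show "is_path ?A As (concat (replicate m v)) Q As \<Longrightarrow> \<forall>i \<le> m * length v. Q!i = xs!(i mod length v)"
    proof (induction m arbitrary: Q)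
      case 0
      then have "Q = [As]" using path_NilD by fastforce
      then show ?case using path_0[OF pv] by simp
    next
      case (Suc m)
      obtain R where R: "is_path ?A As (concat (replicate m v)) R As" using path_pow[OF TA[OF pv]] by blast
      have "is_path ?A As (concat (replicate (Suc m) v)) (R @ tl xs) As"
        using path_append[OF R TA[OF pv]] rep_snoc by metis
      then have Q: "Q = R @ tl xs" using path_unique[OF Suc.prems] LAs by blast
      have lR: "length R = Suc (m * length v)" using path_len[OF R] by (simp add: length_concat sum_list_replicate)
      have IH: "\<forall>i \<le> m * length v. R!i = xs!(i mod length v)" using Suc.IH[OF R] .
      show ?case
      proof (intro allI impI)
        fix i assume i: "i \<le> Suc m * length v"
        show "Q ! i = xs ! (i mod length v)"
        proof (cases "i \<le> m * length v")
          case True then show ?thesis using IH lR Q by (simp add: nth_append)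
        next
          case False
          define k where "k = i - m * length v"
          have k: "i = m * length v + k" "0 < k" "k \<le> length v" using i False unfolding k_def by auto
          have "Q ! i = xs ! k" using app_nth_tl[OF lR, of xs k] path_end[OF R] path_0[OF pv] path_len[OF pv] k Q by (simp add: length_concat sum_list_replicate)
          moreover have "xs ! k = xs ! (i mod length v)"
          proof (cases "k = length v")
            case True then show ?thesis using k path_0[OF pv] path_end[OF pv] by simp
          next
            case False then show ?thesis using k by simp
          qed
          ultimately show ?thesis by simp
        qed
      qed
    qed
  qed
  have lvpos: "0 < length v" using vne by simp
  have hit: "\<And>xs B. is_path ?T As v xs As \<Longrightarrow> B \<in> s \<Longrightarrow> B \<noteq> As \<Longrightarrow> \<exists>r < length v. xs!r = B"
  proof -
    fix xs B assume pv: "is_path ?T As v xs As" and B: "B \<in> s" "B \<noteq> As"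
    obtain p ps q qs where ps: "is_path ?T As p ps B" and qs: "is_path ?T B q qs As"
      using B schar unfolding treach_def by blast
    have "p \<noteq> []" using ps B(2) path_NilD by fastforce
    then obtain m where m: "p @ q = concat (replicate m v)" using loops path_append[OF ps qs] by blast
    have Q: "is_path ?A As (concat (replicate m v)) (ps @ tl qs) As" using path_append[OF TA[OF ps] TA[OF qs]] m by simp
    have "length (p @ q) = m * length v" unfolding m by (simp add: length_concat sum_list_replicate)
    then have "length p \<le> m * length v" by simp
    then have "(ps @ tl qs) ! length p = xs ! (length p mod length v)" using rep[OF pv Q] by blast
    moreover have "(ps @ tl qs) ! length p = B" using path_len[OF ps] path_end[OF ps] by (simp add: nth_append)
    ultimately show "\<exists>r < length v. xs!r = B" using lvpos by (metis mod_less_divisor)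
  qed
  have c3: "\<forall>xs. is_path ?T As v xs As \<longrightarrow> (\<forall>B \<in> s - {As}. card {i. i \<le> length v \<and> xs ! i = B} = 1)"
  proof (intro allI impI ballI)
    fix xs B assume pv: "is_path ?T As v xs As" and B: "B \<in> s - {As}"
    obtain r where r: "r < length v" "xs!r = B" using hit[OF pv] B by blast
    have "{i. i \<le> length v \<and> xs ! i = B} = {r}"
    proof (intro equalityI subsetI)
      fix i assume i: "i \<in> {i. i \<le> length v \<and> xs ! i = B}"
      show "i \<in> {r}"
      proof (rule ccontr)
        assume "i \<notin> {r}"
        then have ne: "i \<noteq> r" by simp
        have x0: "xs!0 = As" using path_0[OF pv] .
        have "i \<noteq> 0" using i B x0 by (metis (mono_tags, lifting) DiffD2 insertI1 mem_Collect_eq)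
        moreover have "r \<noteq> 0" using r B x0 by (metis DiffD2 insertI1)
        ultimately have "0 < min i r" by simp
        then show False using splice[OF pv, of "min i r" "max i r"] i r ne
          by (cases "i < r") (auto simp: min_def max_def)
      qed
    qed (use r in auto)
    then show "card {i. i \<le> length v \<and> xs ! i = B} = 1" by simp
  qed
  have c4: "length v = card s"
  proof -
    have img: "s = (\<lambda>i. vxs!i) ` {..<length v}"
    proof (intro equalityI subsetI)
      fix B assume B: "B \<in> s"
      show "B \<in> (\<lambda>i. vxs!i) ` {..<length v}"
      proof (cases "B = As")
        case True then show ?thesis using path_0[OF vxs] lvpos by force
      next
        case False then show ?thesis using hit[OF vxs B] by force
      qed
    next
      fix B assume "B \<in> (\<lambda>i. vxs!i) ` {..<length v}"
      then obtain i where i: "i < length v" "B = vxs!i" by blast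
      have "?T (vxs!i) (v!i) (vxs!Suc i)" using path_nth[OF vxs i(1)] .
      then have "B \<in> TStates iv \<kappa> M1 M2" using i unfolding TArc_def by simp
      moreover have "treach iv \<kappa> M1 M2 As B" using path_split(1)[OF vxs, of i] i path_0[OF vxs]
        unfolding treach_def by auto
      moreover have "treach iv \<kappa> M1 M2 B As" using path_split(2)[OF vxs, of i] i
        unfolding treach_def by auto
      ultimately show "B \<in> s" using schar by blast
    qed
    have "inj_on (\<lambda>i. vxs!i) {..<length v}"
    proof (rule inj_onI)
      fix i j assume ij: "i \<in> {..<length v}" "j \<in> {..<length v}" "vxs!i = vxs!j"
      show "i = j"
      proof (rule ccontr)
        assume "i \<noteq> j"
        then show False using splice[OF vxs, of "min i j" "max i j"] ij
          by (cases "i < j") (auto simp: min_def max_def)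
      qed
    qed
    then show ?thesis using img card_image by fastforce
  qed
  show ?thesis using c1 c2 c3 c4 by blast
qed


end
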